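(* Let $n\ge 1$, let $a>0$ be a scaling factor, and let $\alpha=(\alpha_1,\alpha_2,\dotsc)$ be a weak composition of $n$. Let $\operatorname{ord}\alpha$ denote the partition obtained by arranging the parts of $\alpha$ in weakly decreasing order. Let $f:\mathbb{R}_{\ge 0}\to\mathbb{R}_{\ge 0}$ be right-continuous and weakly decreasing with $f(x)\to 0$ as $x\to\infty$. Then \[ \|\rho_a(\operatorname{ord}\alpha)-f\|_\infty\le \|\rho_a(\alpha)-f\|_\infty, \] where $\|g\|_\infty=\sup\{|g(x)|:x\ge 0\}$.
   Context: A weak composition of $n$ is an infinite sequence $\alpha=(\alpha_1,\alpha_2,\dotsc)$ of nonnegative integers with $\sum_i\alpha_i=n$. Its diagram-boundary function is $\partial\alpha(x)=\alpha_{\lfloor x\rfloor+1}$ for $x\ge 0$. With scaling factor $a>0$ (row lengths multiplied by $1/a$, column heights by $a/n$), the rescaled diagram-boundary function is $\rho_a(\alpha)(x)=\frac{a}{n}\,\partial\alpha(ax)=\frac{a}{n}\alpha_{\lfloor ax\rfloor+1}$; the same definition applies to partitions (viewed as weakly decreasing weak compositions). *)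

theory Defs
  imports "HOL-Analysis.Analysis" "HOL-Library.Multiset"
begin

(* A weak composition alpha = (alpha_1, alpha_2, ...) is represented 0-indexed:
   the function  al :: nat => nat  with  al i = alpha_(i+1). *)
definition weak_composition :: "nat \<Rightarrow> (nat \<Rightarrow> nat) \<Rightarrow> bool" where
  "weak_composition n al \<longleftrightarrow> finite {i. al i \<noteq> 0} \<and> (\<Sum>i\<in>{i. al i \<noteq> 0}. al i) = n"

definition parts :: "(nat \<Rightarrow> nat) \<Rightarrow> nat multiset" where
  "parts al = image_mset al (mset_set {i. al i \<noteq> 0})"

definition ord_comp :: "(nat \<Rightarrow> nat) \<Rightarrow> (nat \<Rightarrow> nat)" where
  "ord_comp al i = (let L = rev (sorted_list_of_multiset (parts al)) in
                     if i < length L then L ! i else 0)"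

(* diagram-boundary function: partial alpha (x) = alpha_(floor x + 1) = al (floor x) *)
definition boundary :: "(nat \<Rightarrow> nat) \<Rightarrow> real \<Rightarrow> real" where
  "boundary al x = real (al (nat \<lfloor>x\<rfloor>))"

definition rho :: "nat \<Rightarrow> real \<Rightarrow> (nat \<Rightarrow> nat) \<Rightarrow> real \<Rightarrow> real" where
  "rho n a al x = (a / real n) * boundary al (a * x)"

definition supnorm :: "(real \<Rightarrow> real) \<Rightarrow> ereal" where
  "supnorm g = (SUP x\<in>{0::real..}. ereal \<bar>g x\<bar>)"

end

theory Submission
  imports Defs
begin

lemma count_len:
  assumes fin: "finite {j. al j \<noteq> 0}"
  shows "length (filter P (rev (sorted_list_of_multiset (parts al)))) = card {j\<in>{j. al j \<noteq> 0}. P (al j)}"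
proof -
  let ?xs = "rev (sorted_list_of_multiset (parts al))"
  have "length (filter P ?xs) = size (mset (filter P ?xs))" by (rule size_mset[symmetric])
  also have "\<dots> = size (filter_mset P (parts al))"
    by (simp only: mset_filter mset_rev mset_sorted_list_of_multiset)
  also have "\<dots> = size (filter_mset (\<lambda>j. P (al j)) (mset_set {j. al j \<noteq> 0}))"
    unfolding parts_def filter_mset_image_mset by simp
  also have "\<dots> = card {j\<in>{j. al j \<noteq> 0}. P (al j)}" using fin by simp
  finally show ?thesis .
qed

lemma comb:
  assumes fin: "finite {j. al j \<noteq> 0}"
  shows "(\<exists>j\<ge>i. ord_comp al i \<le> al j) \<and> (\<exists>j\<le>i. al j \<le> ord_comp al i)"
proof -
  let ?S = "{j. al j \<noteq> 0}"
  define xs where "xs = rev (sorted_list_of_multiset (parts al))"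
  have len: "length xs = card ?S"
    using count_len[OF fin, of "\<lambda>_. True"] unfolding xs_def by simp
  have srt: "sorted_wrt (\<ge>) xs" unfolding xs_def sorted_wrt_rev
    using sorted_sorted_list_of_multiset by simp
  have oc: "ord_comp al i = (if i < length xs then xs ! i else 0)"
    unfolding ord_comp_def xs_def Let_def by simp
  show ?thesis
  proof (cases "i < length xs")
    case False
    hence b0: "ord_comp al i = 0" using oc by simp
    have A: "\<exists>j\<ge>i. ord_comp al i \<le> al j" using b0 by auto
    have "\<not> {..i} \<subseteq> ?S"
    proof
      assume "{..i} \<subseteq> ?S"
      hence "card {..i} \<le> card ?S" using fin by (rule card_mono[rotated])
      thus False using False len by simp
    qed
    then obtain j where "j \<le> i" "al j = 0" by auto
    thus ?thesis using A b0 by auto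
  next
    case True
    hence b: "ord_comp al i = xs ! i" using oc by simp
    have "Suc i \<le> length (filter (\<lambda>v. xs ! i \<le> v) xs)"
    proof -
      have "filter (\<lambda>v. xs ! i \<le> v) (take (Suc i) xs) = take (Suc i) xs"
      proof (rule filter_True, rule ballI)
        fix v assume "v \<in> set (take (Suc i) xs)"
        then obtain k where k: "k < length (take (Suc i) xs)" "v = take (Suc i) xs ! k"
          by (metis in_set_conv_nth)
        hence kk: "k \<le> i" "v = xs ! k" "k < length xs" by auto
        show "xs ! i \<le> v"
        proof (cases "k = i")
          case True thus ?thesis using kk by simp
        next
          case False
          hence "k < i" using kk by simp
          thus ?thesis using sorted_wrt_nth_less[OF srt, of k i] kk True by simp
        qed
      qed
      hence "Suc i = length (filter (\<lambda>v. xs ! i \<le> v) (take (Suc i) xs))" using True by simp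
      also have "\<dots> \<le> length (filter (\<lambda>v. xs ! i \<le> v) xs)"
        by (metis append_take_drop_id filter_append length_append le_add1)
      finally show ?thesis .
    qed
    hence c1: "Suc i \<le> card {j\<in>?S. xs ! i \<le> al j}"
      using count_len[OF fin] unfolding xs_def by simp
    have "\<not> {j\<in>?S. xs ! i \<le> al j} \<subseteq> {..<i}"
    proof
      assume "{j\<in>?S. xs ! i \<le> al j} \<subseteq> {..<i}"
      hence "card {j\<in>?S. xs ! i \<le> al j} \<le> card {..<i}" by (rule card_mono[rotated]) simp
      thus False using c1 by simp
    qed
    then obtain j where "j \<in> {j\<in>?S. xs ! i \<le> al j}" "j \<notin> {..<i}" by blast
    hence j: "j \<ge> i" "xs ! i \<le> al j" by auto
    have "length (filter (\<lambda>v. xs ! i < v) xs) \<le> i"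
    proof -
      have "filter (\<lambda>v. xs ! i < v) (drop i xs) = []"
      proof (rule filter_False, rule ballI)
        fix v assume "v \<in> set (drop i xs)"
        then obtain k where k: "k < length (drop i xs)" "v = drop i xs ! k"
          by (metis in_set_conv_nth)
        hence kk: "v = xs ! (i + k)" "i + k < length xs" by auto
        show "\<not> xs ! i < v"
        proof (cases "k = 0")
          case True thus ?thesis using kk by simp
        next
          case False
          thus ?thesis using sorted_wrt_nth_less[OF srt, of i "i+k"] kk by simp
        qed
      qed
      hence "length (filter (\<lambda>v. xs ! i < v) xs) = length (filter (\<lambda>v. xs ! i < v) (take i xs))"
        by (metis append_take_drop_id filter_append append_Nil2)
      also have "\<dots> \<le> length (take i xs)" by (rule length_filter_le)
      also have "\<dots> \<le> i" by simp
      finally show ?thesis .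
    qed
    hence c2: "card {j\<in>?S. xs ! i < al j} \<le> i"
      using count_len[OF fin] unfolding xs_def by simp
    have "\<not> {..i} \<subseteq> {j\<in>?S. xs ! i < al j}"
    proof
      assume "{..i} \<subseteq> {j\<in>?S. xs ! i < al j}"
      moreover have "finite {j\<in>?S. xs ! i < al j}" using fin by simp
      ultimately have "card {..i} \<le> card {j\<in>?S. xs ! i < al j}" by (rule card_mono[rotated])
      thus False using c2 by simp
    qed
    then obtain j' where "j' \<in> {..i}" "j' \<notin> {j\<in>?S. xs ! i < al j}" by blast
    hence j': "j' \<le> i" "al j' \<le> xs ! i" by auto
    show ?thesis using j j' b by auto
  qed
qed

theorem lemma1:
  fixes n :: nat and a :: real and al :: "nat \<Rightarrow> nat" and f :: "real \<Rightarrow> real"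
  assumes "n \<ge> 1" and "a > 0" and "weak_composition n al"
    and "\<forall>x\<ge>0. f x \<ge> 0"
    and "\<forall>x\<ge>0. continuous (at_right x) f"
    and "\<forall>x y. 0 \<le> x \<longrightarrow> x \<le> y \<longrightarrow> f y \<le> f x"
    and "(f \<longlongrightarrow> 0) at_top"
  shows "supnorm (\<lambda>x. rho n a (ord_comp al) x - f x) \<le> supnorm (\<lambda>x. rho n a al x - f x)"
proof -
  have fin: "finite {j. al j \<noteq> 0}" using assms(3) unfolding weak_composition_def by simp
  define c where "c = a / real n"
  have cpos: "c > 0" using assms(1,2) unfolding c_def by simp
  have mono: "\<And>x y. 0 \<le> x \<Longrightarrow> x \<le> y \<Longrightarrow> f y \<le> f x" using assms(6) by blast
  have rh: "\<And>g x. rho n a g x = c * real (g (nat \<lfloor>a * x\<rfloor>))"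
    unfolding rho_def boundary_def c_def by simp
  have fl: "\<And>j::nat. nat \<lfloor>a * (real j / a)\<rfloor> = j" using assms(2) by simp
  have pt: "\<exists>y\<ge>0. \<bar>rho n a (ord_comp al) x - f x\<bar> \<le> \<bar>rho n a al y - f y\<bar>" if x0: "x \<ge> 0" for x
  proof -
    define i where "i = nat \<lfloor>a * x\<rfloor>"
    have ax: "real i \<le> a * x" "a * x < real i + 1" using x0 assms(2) unfolding i_def
      by (simp_all add: of_nat_nat)
    have r1: "rho n a (ord_comp al) x = c * real (ord_comp al i)" using rh i_def by simp
    show ?thesis
    proof (cases "c * real (ord_comp al i) \<ge> f x")
      case True
      obtain j where j: "j \<ge> i" "ord_comp al i \<le> al j" using comb[OF fin] by blast
      define y where "y = (if j = i then x else real j / a)"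
      have y0: "y \<ge> x"
      proof (cases "j = i")
        case False
        hence "real j \<ge> real i + 1" using j by simp
        hence "a * x \<le> real j" using ax by simp
        thus ?thesis using False assms(2) unfolding y_def by (simp add: field_simps)
      qed (simp add: y_def)
      have yj: "nat \<lfloor>a * y\<rfloor> = j" using fl i_def j unfolding y_def by auto
      have "f y \<le> f x" using mono x0 y0 by blast
      moreover have "c * real (ord_comp al i) \<le> c * real (al j)" using cpos j by simp
      ultimately have "\<bar>rho n a (ord_comp al) x - f x\<bar> \<le> \<bar>rho n a al y - f y\<bar>"
        using True r1 rh[of al y] yj by simp
      thus ?thesis using y0 x0 by (intro exI[of _ y]) simp
    next
      case False
      obtain j where j: "j \<le> i" "al j \<le> ord_comp al i" using comb[OF fin] by blast
      define y where "y = (if j = i then x else real j / a)"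
      have y0: "y \<le> x"
      proof (cases "j = i")
        case False
        hence "real j \<le> a * x" using j ax by simp
        thus ?thesis using False assms(2) unfolding y_def by (simp add: field_simps)
      qed (simp add: y_def)
      have yp: "y \<ge> 0" using x0 assms(2) unfolding y_def by simp
      have yj: "nat \<lfloor>a * y\<rfloor> = j" using fl i_def j unfolding y_def by auto
      have "f x \<le> f y" using mono yp y0 by blast
      moreover have "c * real (al j) \<le> c * real (ord_comp al i)" using cpos j by simp
      ultimately have "\<bar>rho n a (ord_comp al) x - f x\<bar> \<le> \<bar>rho n a al y - f y\<bar>"
        using False r1 rh[of al y] yj by simp
      thus ?thesis using yp by blast
    qed
  qed
  show ?thesis unfolding supnorm_def
  proof (rule SUP_least)
    fix x :: real assume "x \<in> {0..}"
    then obtain y where y: "y \<ge> 0" "\<bar>rho n a (ord_comp al) x - f x\<bar> \<le> \<bar>rho n a al y - f y\<bar>"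
      using pt by auto
    have "ereal \<bar>rho n a (ord_comp al) x - f x\<bar> \<le> ereal \<bar>rho n a al y - f y\<bar>" using y by simp
    also have "\<dots> \<le> (SUP x\<in>{0..}. ereal \<bar>rho n a al x - f x\<bar>)"
      using y by (intro SUP_upper) auto
    finally show "ereal \<bar>rho n a (ord_comp al) x - f x\<bar> \<le> (SUP x\<in>{0..}. ereal \<bar>rho n a al x - f x\<bar>)" .
  qed
qed

end
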